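(* Let $M>0$ and $E\in(\sqrt{25/27},1)$. Let $W(r;H,L)=\frac12\bigl(\frac{L^2}{r^2}-2H\bigr)\bigl(1-\frac{2M}{r}\bigr)$ for $r>2M$, $Z(r;H,L)=W(r;H,L)-\frac12E^2$, $\widetilde\Lambda=\{(H,L): H<0,\ L>4\sqrt2\sqrt{-H}M\}$, $r_0(H,L)=\dfrac{L^2+L\sqrt{L^2+24HM^2}}{-4HM}$, $\omega_0(H,L)=-W(r_0(H,L);H,L)$, and $$\Lambda_E=\Bigl\{(H,L)\in\widetilde\Lambda:\ -\omega_0(H,L)<\tfrac12E^2<-H\Bigr\}.$$ Then $$\Lambda_E=\Bigl\{(H,L)\in\mathbb{R}^2:\ -\tfrac{27}{50}E^2<H<-\tfrac12E^2,\ \ 4\sqrt2\sqrt{-H}\,M<L<\sqrt{-H}\,M\,\zeta^{-1}\Bigl(\frac{E^2}{-2H}\Bigr)\Bigr\}.$$ Moreover: (i) for every $(H,L)\in\Lambda_E$, $Z(r_0(H,L);H,L)<0$, $Z'(r_0(H,L);H,L)=0$, $Z''(r_0(H,L);H,L)>0$; (ii) there exist continuous functions $r_-,r_+\colon\Lambda_E\to(0,+\infty)$ with $r_-<r_0<r_+$ such that, for every $(H,L)\in\Lambda_E$, $Z(r_\pm(H,L);H,L)=0$ and $Z'(r;H,L)(r-r_0(H,L))>0$ for every $r\in[r_-(H,L),r_+(H,L)]\setminus\{r_0(H,L)\}$.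
   Context: Derivatives ${}'$ are with respect to $r$. The function $\zeta\colon(4\sqrt2,+\infty)\to\mathbb{R}$ is $\zeta(u)=\dfrac{u^4-20u^2+32+u(u^2-8)\sqrt{u^2-24}}{u^4-18u^2+u(u^2-6)\sqrt{u^2-24}}$; it is strictly increasing with image $(25/27,1)$, and $\zeta^{-1}$ denotes its inverse. *)

theory Defs
  imports "HOL-Analysis.Analysis"
begin

definition zeta :: "real \<Rightarrow> real" where
  "zeta u = (u^4 - 20*u^2 + 32 + u*(u^2 - 8) * sqrt (u^2 - 24)) /
            (u^4 - 18*u^2 + u*(u^2 - 6) * sqrt (u^2 - 24))"

definition zeta_inv :: "real \<Rightarrow> real" where
  "zeta_inv = the_inv_into {4 * sqrt 2<..} zeta"

definition W :: "real \<Rightarrow> real \<Rightarrow> real \<Rightarrow> real \<Rightarrow> real" where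
  "W M H L r = 1/2 * (L^2 / r^2 - 2*H) * (1 - 2*M / r)"

definition Z :: "real \<Rightarrow> real \<Rightarrow> real \<Rightarrow> real \<Rightarrow> real \<Rightarrow> real" where
  "Z M E H L r = W M H L r - 1/2 * E^2"

definition Lambda_tilde :: "real \<Rightarrow> (real \<times> real) set" where
  "Lambda_tilde M = {(H, L). H < 0 \<and> L > 4 * sqrt 2 * sqrt (-H) * M}"

definition r0 :: "real \<Rightarrow> real \<Rightarrow> real \<Rightarrow> real" where
  "r0 M H L = (L^2 + L * sqrt (L^2 + 24*H*M^2)) / (-4*H*M)"

definition omega0 :: "real \<Rightarrow> real \<Rightarrow> real \<Rightarrow> real" where
  "omega0 M H L = - W M H L (r0 M H L)"

definition Lambda_E :: "real \<Rightarrow> real \<Rightarrow> (real \<times> real) set" where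
  "Lambda_E M E = {(H, L). (H, L) \<in> Lambda_tilde M \<and>
      - omega0 M H L < 1/2 * E^2 \<and> 1/2 * E^2 < -H}"

end

theory Submission
  imports Defs
begin


definition gg :: "real \<Rightarrow> real" where "gg s = (s-2)^2/(s*(s-3))"
definition ss :: "real \<Rightarrow> real" where "ss u = (u^2 + u* sqrt(u^2-24))/4"

lemma sq_gt32: assumes "4 * sqrt 2 < (u::real)" shows "u^2 > 32" "u > 0"
proof -
  have p: "0 < 4 * sqrt (2::real)" by simp
  have "(4 * sqrt (2::real))^2 = 32" by (simp add: power_mult_distrib)
  moreover have "(4 * sqrt (2::real))^2 < u^2" using assms p
    by (meson less_le_trans power_strict_mono zero_less_numeral order.strict_implies_order zero_less_two)
  ultimately show "u^2 > 32" by simp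
  show "u > 0" using p assms by linarith
qed

lemma ss_gt12: assumes "u^2 > 32" "u > 0" shows "ss u > 12"
proof -
  define q where "q = sqrt(u^2-24)"
  have q2: "q^2 = u^2 - 24" using assms unfolding q_def by simp
  have q0: "q \<ge> 0" unfolding q_def using assms by simp
  have "u^2*(u^2-24) > 32*8" using assms by (intro mult_strict_mono) auto
  hence A: "(u*q)^2 > 16^2" unfolding power_mult_distrib q2 by simp
  have "u*q > 16"
  proof (rule ccontr)
    assume "\<not> u*q > 16"
    hence "(u*q)^2 \<le> 16^2" using q0 assms by (intro power_mono) auto
    thus False using A by simp
  qed
  thus ?thesis unfolding ss_def q_def[symmetric] using assms by simp
qed

lemma ss_mono: assumes "u^2 > 32" "u > 0" "u < v" shows "ss u < ss v"
proof -
  have v2: "u^2 < v^2" using assms by (simp add: power_strict_mono)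
  have "sqrt(u^2-24) \<le> sqrt(v^2-24)" using v2 by simp
  moreover have "sqrt(u^2-24) \<ge> 0" using assms by simp
  ultimately have "u* sqrt(u^2-24) \<le> v * sqrt(v^2-24)" using assms
    by (simp add: mult_mono)
  thus ?thesis unfolding ss_def using v2 by simp
qed

lemma zeta_gg: assumes "4 * sqrt 2 < u" shows "zeta u = gg (ss u)"
proof -
  have u2: "u^2 > 32" "u > 0" using sq_gt32 assms by auto
  define q where "q = sqrt(u^2-24)"
  have q2: "q^2 = u^2 - 24" using u2 unfolding q_def by simp
  define s where "s = ss u"
  have s12: "s > 12" unfolding s_def using ss_gt12 u2 by simp
  have sd: "s = (u^2 + u*q)/4" unfolding s_def ss_def q_def ..
  have N: "16*(s-2)^2 = 2*(u^4 - 20*u^2 + 32 + u*(u^2 - 8) * q)"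
  proof -
    have "16*(s-2)^2 - 2*(u^4 - 20*u^2 + 32 + u*(u^2 - 8) * q) = u^2*(q^2 - (u^2-24))"
      unfolding sd power4_eq_xxxx power2_eq_square by (simp add: field_simps)
    thus ?thesis using q2 by simp
  qed
  have D: "16*(s*(s-3)) = 2*(u^4 - 18*u^2 + u*(u^2 - 6) * q)"
  proof -
    have "16*(s*(s-3)) - 2*(u^4 - 18*u^2 + u*(u^2 - 6) * q) = u^2*(q^2 - (u^2-24))"
      unfolding sd power4_eq_xxxx power2_eq_square by (simp add: field_simps)
    thus ?thesis using q2 by simp
  qed
  have N': "u^4 - 20*u^2 + 32 + u*(u^2 - 8) * q = 8*(s-2)^2" using N by simp
  have D': "u^4 - 18*u^2 + u*(u^2 - 6) * q = 8*(s*(s-3))" using D by simp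
  have "zeta u = (8*(s-2)^2) / (8*(s*(s-3)))"
    unfolding zeta_def q_def[symmetric] N' D' by simp
  also have "\<dots> = gg s" unfolding gg_def by simp
  finally show ?thesis unfolding s_def .
qed

lemma gg_alt: assumes "s > 3" shows "gg s = 1 - (s-4)/(s*(s-3))"
  unfolding gg_def using assms by (simp add: field_simps power2_eq_square) 

lemma gg_mono: assumes "6 < a" "a < b" shows "gg a < gg b"
proof -
  have "0 < (b-a)*((a-4)*(b-4)-4)"
  proof -
    have "(a-4)*(b-4) > 2*2" using assms by (intro mult_strict_mono) auto
    thus ?thesis using assms by simp
  qed
  hence "(b-4)*(a*(a-3)) < (a-4)*(b*(b-3))" by (simp add: algebra_simps)
  hence "(b-4)/(b*(b-3)) < (a-4)/(a*(a-3))" using assms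
    by (simp add: divide_simps mult.commute mult.left_commute)
  thus ?thesis using assms gg_alt by simp
qed

lemma gg_lt1: "s > 4 \<Longrightarrow> gg s < 1" using gg_alt[of s] by simp

lemma gg_12: "gg 12 = 25/27" unfolding gg_def by simp

lemma gg_lower: assumes "s > 4" shows "gg s > 1 - 1/s"
proof -
  have "(s-4)/(s*(s-3)) < 1/s" using assms by (simp add: divide_simps)
  thus ?thesis using gg_alt assms by simp
qed

lemma zeta_mono: assumes "4* sqrt 2 < u" "u < v" shows "zeta u < zeta v"
proof -
  have u2: "u^2 > 32" "u > 0" using sq_gt32 assms by auto
  have "ss u > 12" using ss_gt12 u2 by simp
  moreover have "ss u < ss v" using ss_mono u2 assms by simp
  ultimately have "gg (ss u) < gg (ss v)" by (intro gg_mono) auto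
  thus ?thesis using zeta_gg assms by simp
qed

lemma zeta_range: assumes "4* sqrt 2 < u" shows "25/27 < zeta u" "zeta u < 1"
proof -
  have u2: "u^2 > 32" "u > 0" using sq_gt32 assms by auto
  have "ss u > 12" using ss_gt12 u2 by simp
  thus "25/27 < zeta u" "zeta u < 1" using gg_mono[of 12 "ss u"] gg_12 gg_lt1 zeta_gg assms by auto
qed


lemma zeta_at: "zeta (4 * sqrt 2) = 25/27"
proof -
  have a: "(4 * sqrt (2::real))^2 = 32" by (simp add: power_mult_distrib)
  have b: "(4 * sqrt (2::real))^4 = 1024"
  proof -
    have "(4 * sqrt (2::real))^4 = ((4 * sqrt 2)^2)^2" by (subst power_mult[symmetric]) simp
    thus ?thesis using a by simp
  qed
  have c: "sqrt (8::real) = 2 * sqrt 2"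
    by (metis mult.commute num_double numeral_times_numeral real_sqrt_four real_sqrt_mult)
  have d: "4 * sqrt 2 * (2 * sqrt 2) = (16::real)" by simp
  show ?thesis unfolding zeta_def a b using c d by (simp add: mult.assoc mult.left_commute)
qed

lemma zeta_cont: assumes "4 * sqrt 2 \<le> x" shows "isCont zeta x"
proof -
  have x0: "x > 0" using assms by (smt (verit) real_sqrt_gt_zero)
  have p: "0 < 4 * sqrt (2::real)" by simp
  have "(4 * sqrt (2::real))^2 \<le> x^2" using assms p by (intro power_mono) auto
  hence x2: "x^2 \<ge> 32" by (simp add: power_mult_distrib)
  have "x^4 - 18*x^2 = x^2*(x^2-18)" by (simp add: algebra_simps power4_eq_xxxx power2_eq_square)
  also have "\<dots> > 0" using x2 by (intro mult_pos_pos) auto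
  finally have A: "x^4 - 18*x^2 > 0" .
  have "x*(x^2 - 6) * sqrt (x^2 - 24) \<ge> 0" using x0 x2 by simp
  hence den: "x^4 - 18*x^2 + x*(x^2 - 6) * sqrt (x^2 - 24) \<noteq> 0" using A by linarith
  have "isCont (\<lambda>u. (u^4 - 20*u^2 + 32 + u*(u^2 - 8) * sqrt (u^2 - 24)) /
            (u^4 - 18*u^2 + u*(u^2 - 6) * sqrt (u^2 - 24))) x"
    using den by (intro continuous_intros) auto
  thus ?thesis unfolding zeta_def[abs_def] .
qed

lemma zeta_surj: assumes "25/27 < y" "y < 1" shows "\<exists>v>4 * sqrt 2. zeta v = y"
proof -
  define s where "s = max 13 (1/(1-y) + 1)"
  have s13: "s \<ge> 13" unfolding s_def by simp
  have "1/s < 1 - y"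
  proof -
    have "s > 1/(1-y)" unfolding s_def by simp
    hence "1 < s*(1-y)" using assms by (simp add: field_simps)
    thus ?thesis using s13 by (simp add: field_simps)
  qed
  hence gs: "gg s > y" using gg_lower[of s] s13 by simp
  define Uu where "Uu = 2 * sqrt s"
  have Uu2: "Uu^2 = 4* s" unfolding Uu_def using s13 by (simp add: power_mult_distrib)
  have Uu0: "Uu > 0" unfolding Uu_def using s13 by simp
  have "(4 * sqrt (2::real))^2 < Uu^2" using Uu2 s13 by (simp add: power_mult_distrib)
  then have Uugt: "4 * sqrt 2 < Uu" by (rule power2_less_imp_less) (use Uu0 in linarith)
  have "Uu * sqrt (Uu^2-24) \<ge> 0" using Uu0 Uu2 s13 by simp
  hence sU: "ss Uu \<ge> s" unfolding ss_def using Uu2 by simp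
  have "gg (ss Uu) \<ge> gg s"
  proof (cases "ss Uu = s")
    case True thus ?thesis by simp
  next
    case False thus ?thesis using gg_mono[of s "ss Uu"] s13 sU by simp
  qed
  hence zU: "zeta Uu > y" using zeta_gg[OF Uugt] gs by simp
  have "\<exists>x. 4 * sqrt 2 \<le> x \<and> x \<le> Uu \<and> zeta x = y"
  proof (rule IVT)
    show "zeta (4* sqrt 2) \<le> y" using zeta_at assms by simp
    show "y \<le> zeta Uu" using zU by simp
    show "4* sqrt 2 \<le> Uu" using Uugt by simp
    show "\<forall>x. 4 * sqrt 2 \<le> x \<and> x \<le> Uu \<longrightarrow> isCont zeta x" using zeta_cont by blast
  qed
  then obtain x where x: "4 * sqrt 2 \<le> x" "zeta x = y" by blast
  have "x \<noteq> 4 * sqrt 2"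
  proof
    assume "x = 4* sqrt 2"
    hence "zeta x = 25/27" using zeta_at by simp
    thus False using x assms by simp
  qed
  thus ?thesis using x by (intro exI[of _ x]) auto
qed

lemma zeta_inj: "inj_on zeta {4 * sqrt 2<..}"
  by (rule strict_mono_on_imp_inj_on) (auto simp: strict_mono_on_def intro: zeta_mono)

lemma zeta_inv: assumes "25/27 < y" "y < 1"
  shows "zeta_inv y > 4 * sqrt 2" "zeta (zeta_inv y) = y"
proof -
  have "y \<in> zeta ` {4 * sqrt 2<..}" using zeta_surj[OF assms] by auto
  thus "zeta_inv y > 4 * sqrt 2" "zeta (zeta_inv y) = y"
    unfolding zeta_inv_def using zeta_inj the_inv_into_into[of zeta "{4 * sqrt 2<..}" y]
      f_the_inv_into_f[of zeta "{4 * sqrt 2<..}" y] by auto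
qed

lemma zeta_inv_iff: assumes "25/27 < y" "y < 1" "4 * sqrt 2 < u"
  shows "zeta u < y \<longleftrightarrow> u < zeta_inv y"
proof
  assume "zeta u < y"
  show "u < zeta_inv y"
  proof (rule ccontr)
    assume "\<not> u < zeta_inv y"
    hence "zeta_inv y = u \<or> zeta_inv y < u" by auto
    thus False using zeta_inv[OF assms(1,2)] zeta_mono[of "zeta_inv y" u] \<open>zeta u < y\<close> by auto
  qed
next
  assume "u < zeta_inv y"
  thus "zeta u < y" using zeta_inv[OF assms(1,2)] zeta_mono[of u "zeta_inv y"] assms by simp
qed

definition r1 :: "real \<Rightarrow> real \<Rightarrow> real \<Rightarrow> real" where
  "r1 M H L = (L^2 - L * sqrt (L^2 + 24*H*M^2)) / (-4*H*M)"
definition Zd :: "real \<Rightarrow> real \<Rightarrow> real \<Rightarrow> real \<Rightarrow> real" where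
  "Zd M H L r = (-2*H*M*r^2 - L^2*r + 3*L^2*M) / r^4"

lemma L2_bound: assumes "M > 0" "H < 0" "L > 4 * sqrt 2 * sqrt (-H) * M"
  shows "L^2 > -32*H*M^2" "L > 0"
proof -
  have p: "0 \<le> 4 * sqrt 2 * sqrt (-H) * M" using assms by simp
  have "(4 * sqrt 2 * sqrt (-H) * M)^2 < L^2" using assms p by (intro power_strict_mono) auto
  moreover have "(4 * sqrt 2 * sqrt (-H) * M)^2 = -32*H*M^2" using assms by (simp add: power_mult_distrib)
  ultimately show "L^2 > -32*H*M^2" by simp
  show "L > 0" using p assms by linarith
qed

lemma crit_basic: assumes "M > 0" "H < 0" "L > 4 * sqrt 2 * sqrt (-H) * M"
  shows "3*M < r1 M H L" "r1 M H L < 4*M" "r1 M H L < r0 M H L"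
    "\<And>r. -2*H*M*r^2 - L^2*r + 3*L^2*M = -2*H*M*(r - r0 M H L)*(r - r1 M H L)"
proof -
  note LB = L2_bound[OF assms]
  define S where "S = sqrt (L^2 + 24*H*M^2)"
  have HM0: "H*M^2 < 0" using assms by (simp add: mult_neg_pos)
  have S2: "S^2 = L^2 + 24*H*M^2" unfolding S_def using LB HM0 by simp
  have S0: "S > 0" unfolding S_def using LB HM0 by simp
  have SL: "S < L"
  proof -
    have "S^2 < L^2" using S2 HM0 by simp
    then show ?thesis by (rule power2_less_imp_less) (use LB(2) in linarith)
  qed
  have LS: "L < 2*S"
  proof -
    have "L^2 < (2*S)^2" using S2 LB by (simp add: power_mult_distrib)
    then show ?thesis by (rule power2_less_imp_less) (use S0 in linarith)
  qed
  have d: "-4*H*M > 0" using assms by (simp add: mult_neg_pos)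
  have r1d: "r1 M H L = (L^2 - L*S)/(-4*H*M)" unfolding r1_def S_def ..
  have r0d: "r0 M H L = (L^2 + L*S)/(-4*H*M)" unfolding r0_def S_def ..
  have e1: "(L-S)*(L-2*S) < 0" using SL LS by (simp add: mult_pos_neg)
  have e2: "(L-S)^2 > 0" using SL by simp
  have HM: "H*M^2 = (S^2 - L^2)/24" using S2 by simp
  have f1: "L^2 - L*S < 4*M*(-4*H*M)"
  proof -
    have "4*M*(-4*H*M) = -16*(H*M^2)" by (simp add: power2_eq_square)
    thus ?thesis unfolding HM using e1 by (simp add: algebra_simps power2_eq_square)
  qed
  show "r1 M H L < 4*M" unfolding r1d by (subst pos_divide_less_eq[OF d]) (rule f1)
  have f2: "3*M*(-4*H*M) < L^2 - L*S"
  proof -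
    have "3*M*(-4*H*M) = -12*(H*M^2)" by (simp add: power2_eq_square)
    thus ?thesis unfolding HM using e2 by (simp add: algebra_simps power2_eq_square)
  qed
  show "3*M < r1 M H L" unfolding r1d by (subst pos_less_divide_eq[OF d]) (rule f2)
  show "r1 M H L < r0 M H L" unfolding r1d r0d using d S0 LB by (intro divide_strict_right_mono) auto
  fix r
  have nz: "H \<noteq> 0" "M \<noteq> 0" using assms by auto
  have sum: "r0 M H L + r1 M H L = L^2/(-2*H*M)" unfolding r1d r0d using nz by (simp add: field_simps)
  have prod: "r0 M H L * r1 M H L = -3*L^2/(2*H)"
  proof -
    have "r0 M H L * r1 M H L = (L^2*(L^2 - S^2))/((-4*H*M)^2)" unfolding r1d r0d
      by (simp add: power2_eq_square algebra_simps)
    also have "\<dots> = -3*L^2/(2*H)" unfolding S2 using nz by (simp add: field_simps power2_eq_square)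
    finally show ?thesis .
  qed
  have "-2*H*M*(r - r0 M H L)*(r - r1 M H L) = -2*H*M*(r^2 - (r0 M H L + r1 M H L)*r + r0 M H L * r1 M H L)"
    by (simp add: algebra_simps power2_eq_square)
  also have "\<dots> = -2*H*M*r^2 - L^2*r + 3*L^2*M" unfolding sum prod using nz
    by (simp add: field_simps power2_eq_square)
  finally show "-2*H*M*r^2 - L^2*r + 3*L^2*M = -2*H*M*(r - r0 M H L)*(r - r1 M H L)" ..
qed

lemma Z_deriv: assumes "r \<noteq> 0" shows "(Z M E H L has_real_derivative Zd M H L r) (at r)"
proof -
  have "((\<lambda>r. 1/2 * (L^2 / r^2 - 2*H) * (1 - 2*M / r) - 1/2 * E^2) has_real_derivative
     1/2 * ((L^2 * -(2*r)/(r^2)^2) * (1 - 2*M/r) + (L^2 / r^2 - 2*H) * (2*M/r^2))) (at r)"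
    using assms by (auto intro!: derivative_eq_intros simp: power2_eq_square)
  moreover have "1/2 * ((L^2 * -(2*r)/(r^2)^2) * (1 - 2*M/r) + (L^2 / r^2 - 2*H) * (2*M/r^2)) = Zd M H L r"
    unfolding Zd_def using assms by (simp add: field_simps power2_eq_square power4_eq_xxxx)
  ultimately show ?thesis unfolding Z_def[abs_def] W_def by simp
qed

lemma W_crit: assumes "r > 3*M" "M > 0" "-2*H*M*r^2 - L^2*r + 3*L^2*M = 0"
  shows "W M H L r = -H*(r-2*M)^2/(r*(r-3*M))"
proof -
  have r0: "r > 0" "r - 3*M > 0" using assms by auto
  have L2: "L^2 = -2*H*M*r^2/(r-3*M)" using assms r0 by (simp add: field_simps)
  show ?thesis unfolding W_def L2 using r0 assms by (simp add: field_simps power2_eq_square)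
qed




lemma W_r0_zeta: assumes "M > 0" "H < 0" "L > 4 * sqrt 2 * sqrt (-H) * M"
  shows "4 * sqrt 2 < L/(sqrt(-H)*M)" "W M H L (r0 M H L) = -H * zeta (L/(sqrt(-H)*M))"
proof -
  define sh where "sh = sqrt(-H)"
  have sh0: "sh > 0" unfolding sh_def using assms by simp
  have sh2: "sh^2 = -H" unfolding sh_def using assms by simp
  define u where "u = L/(sh*M)"
  have Lu: "L = u*(sh*M)" unfolding u_def using sh0 assms by simp
  have shM: "sh*M > 0" using sh0 assms by simp
  show ug: "4 * sqrt 2 < L/(sqrt(-H)*M)" using assms(3) shM unfolding sh_def[symmetric]
    by (simp add: pos_less_divide_eq mult.assoc)
  hence ug': "4 * sqrt 2 < u" unfolding u_def sh_def .
  have u2: "u^2 > 32" "u > 0" using sq_gt32 ug' by auto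
  define q where "q = sqrt(u^2-24)"
  have "L^2 + 24*H*M^2 = (sh*M)^2 * (u^2-24)" unfolding Lu using sh2
    by (simp add: algebra_simps power_mult_distrib)
  hence S: "sqrt (L^2 + 24*H*M^2) = (sh*M) * q" unfolding q_def using shM
    by (simp add: real_sqrt_mult)
  have r0e: "r0 M H L = M * ss u"
  proof -
    have "r0 M H L = ((sh*M)^2*(u^2 + u*q))/(-4*H*M)" unfolding r0_def S unfolding Lu
      by (simp add: algebra_simps power_mult_distrib power2_eq_square)
    also have "\<dots> = M * ((u^2 + u*q)/4)" using sh2 assms by (simp add: power_mult_distrib field_simps power2_eq_square)
    finally show ?thesis unfolding ss_def q_def .
  qed
  have s12: "ss u > 12" using ss_gt12 u2 by simp
  have r03: "r0 M H L > 3*M" using crit_basic[OF assms] by simp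
  have "W M H L (r0 M H L) = -H*(r0 M H L-2*M)^2/(r0 M H L*(r0 M H L-3*M))"
    by (rule W_crit[OF r03 assms(1)]) (use crit_basic(4)[OF assms, of "r0 M H L"] in simp)
  also have "\<dots> = -H * gg (ss u)" unfolding r0e gg_def using assms s12
    by (simp add: field_simps power2_eq_square)
  also have "\<dots> = -H * zeta u" using zeta_gg[OF ug'] by simp
  finally show "W M H L (r0 M H L) = -H * zeta (L/(sqrt(-H)*M))" unfolding u_def sh_def .
qed


context
  fixes M E H L :: real
  assumes M0: "M > 0" and H0: "H < 0" and LL: "L > 4 * sqrt 2 * sqrt (-H) * M"
begin

lemma CB: "3*M < r1 M H L" "r1 M H L < 4*M" "r1 M H L < r0 M H L"
  using crit_basic[OF M0 H0 LL] by auto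

lemma r1pos: "0 < r1 M H L" using CB M0 by linarith

lemma Zfac: "x \<noteq> 0 \<Longrightarrow> Zd M H L x = -2*H*M*(x - r0 M H L)*(x - r1 M H L)/x^4"
  unfolding Zd_def using crit_basic(4)[OF M0 H0 LL, of x] by simp

lemma cHM: "-2*H*M > 0" using M0 H0 by (simp add: mult_neg_pos)

lemma Z_cont: "x > 0 \<Longrightarrow> isCont (Z M E H L) x"
  using Z_deriv[of x M E H L] DERIV_isCont by fastforce

lemma Z_cont_on: "0 < a \<Longrightarrow> continuous_on {a..b} (Z M E H L)"
  by (intro continuous_at_imp_continuous_on ballI Z_cont) auto

lemma Z_dec: assumes "r1 M H L \<le> a" "a < b" "b \<le> r0 M H L" shows "Z M E H L b < Z M E H L a"
proof (rule DERIV_neg_imp_decreasing_open[OF assms(2)])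
  fix x assume x: "a < x" "x < b"
  hence xp: "x > 0" using assms r1pos by linarith
  have "-2*H*M*(x - r0 M H L)*(x - r1 M H L) < 0"
  proof -
    have "x - r0 M H L < 0" "x - r1 M H L > 0" using x assms by auto
    hence "(x - r0 M H L)*(x - r1 M H L) < 0" by (simp add: mult_neg_pos)
    hence "(-2*H*M) * ((x - r0 M H L)*(x - r1 M H L)) < 0" by (rule mult_pos_neg[OF cHM])
    thus ?thesis by (simp only: mult.assoc)
  qed
  hence "-2*H*M*(x - r0 M H L)*(x - r1 M H L) / x^4 < 0" using xp by (intro divide_neg_pos) auto
  hence "Zd M H L x < 0" using Zfac[of x] xp by simp
  thus "\<exists>y. DERIV (Z M E H L) x :> y \<and> y < 0"
    by (intro exI[of _ "Zd M H L x"]) (use Z_deriv[of x M E H L] xp in auto)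
next
  show "continuous_on {a..b} (Z M E H L)" using Z_cont_on assms r1pos by simp
qed

lemma Z_inc: assumes "r0 M H L \<le> a" "a < b" shows "Z M E H L a < Z M E H L b"
proof (rule DERIV_pos_imp_increasing_open[OF assms(2)])
  fix x assume x: "a < x" "x < b"
  hence xp: "x > 0" using assms r1pos CB by linarith
  have "-2*H*M*(x - r0 M H L)*(x - r1 M H L) > 0"
  proof -
    have "x - r0 M H L > 0" "x - r1 M H L > 0" using x assms CB by auto
    hence "(x - r0 M H L)*(x - r1 M H L) > 0" by simp
    hence "(-2*H*M) * ((x - r0 M H L)*(x - r1 M H L)) > 0" by (rule mult_pos_pos[OF cHM])
    thus ?thesis by (simp only: mult.assoc)
  qed
  hence "-2*H*M*(x - r0 M H L)*(x - r1 M H L) / x^4 > 0" using xp by (intro divide_pos_pos) auto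
  hence "Zd M H L x > 0" using Zfac[of x] xp by simp
  thus "\<exists>y. DERIV (Z M E H L) x :> y \<and> y > 0"
    by (intro exI[of _ "Zd M H L x"]) (use Z_deriv[of x M E H L] xp in auto)
next
  show "continuous_on {a..b} (Z M E H L)" using Z_cont_on assms r1pos CB by simp
qed

lemma Z_r1_pos: assumes "E^2/2 < -H" shows "Z M E H L (r1 M H L) > 0"
proof -
  have r13: "r1 M H L > 3*M" using CB by simp
  have W1: "W M H L (r1 M H L) = -H*(r1 M H L-2*M)^2/(r1 M H L*(r1 M H L-3*M))"
    by (rule W_crit[OF r13 M0]) (use crit_basic(4)[OF M0 H0 LL, of "r1 M H L"] in simp)
  have den: "r1 M H L*(r1 M H L-3*M) > 0" using r13 r1pos by simp
  have "r1 M H L*(r1 M H L-3*M) < (r1 M H L-2*M)^2"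
  proof -
    have "(r1 M H L-2*M)^2 - r1 M H L*(r1 M H L-3*M) = M*(4*M - r1 M H L)"
      by (simp add: algebra_simps power2_eq_square)
    also have "\<dots> > 0" using CB M0 by simp
    finally show ?thesis by simp
  qed
  hence "1 < (r1 M H L-2*M)^2/(r1 M H L*(r1 M H L-3*M))" using den by simp
  hence "-H * 1 < -H * ((r1 M H L-2*M)^2/(r1 M H L*(r1 M H L-3*M)))" using H0
    by (intro mult_strict_left_mono) auto
  hence "W M H L (r1 M H L) > -H" unfolding W1 by simp
  thus ?thesis unfolding Z_def using assms by simp
qed

lemma deriv_Z: "x \<noteq> 0 \<Longrightarrow> deriv (Z M E H L) x = Zd M H L x"
  using Z_deriv DERIV_imp_deriv by blast

lemma deriv_r0: "deriv (Z M E H L) (r0 M H L) = 0"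
  using deriv_Z[of "r0 M H L"] Zfac[of "r0 M H L"] CB r1pos by simp

lemma deriv2_r0: "deriv (deriv (Z M E H L)) (r0 M H L) > 0"
proof -
  define a where "a = r0 M H L"
  define b where "b = r1 M H L"
  have a0: "a > 0" "a > b" unfolding a_def b_def using CB r1pos by auto
  have D: "((\<lambda>x. -2*H*M*(x - a)*(x - b)/x^4) has_real_derivative (-2*H*M*(a-b)/a^4)) (at a)"
  proof -
    have "((\<lambda>x. -2*H*M*(x - a)*(x - b)/x^4) has_real_derivative
       ((-2*H*M*(1 - 0)*(a - b) + -2*H*M*(a - a)*(1-0)) * a^4 - -2*H*M*(a - a)*(a - b) * (4 * a^3)) / (a^4 * a^4)) (at a)"
      using a0 by (auto intro!: derivative_eq_intros)
    moreover have "((-2*H*M*(1 - 0)*(a - b) + -2*H*M*(a - a)*(1-0)) * a^4 - -2*H*M*(a - a)*(a - b) * (4 * a^3)) / (a^4 * a^4)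
       = -2*H*M*(a-b)/a^4" using a0 by (simp add: field_simps)
    ultimately show ?thesis by simp
  qed
  have "(deriv (Z M E H L) has_real_derivative (-2*H*M*(a-b)/a^4)) (at a)"
  proof (rule has_field_derivative_transform_within_open[OF D, of "{0<..}"])
    show "open {0::real<..}" by simp
    show "a \<in> {0<..}" using a0 by simp
    fix x :: real assume "x \<in> {0<..}"
    thus "-2*H*M*(x - a)*(x - b)/x^4 = deriv (Z M E H L) x"
      using deriv_Z[of x] Zfac[of x] unfolding a_def b_def by simp
  qed
  hence "deriv (deriv (Z M E H L)) a = -2*H*M*(a-b)/a^4" by (rule DERIV_imp_deriv)
  also have "\<dots> > 0"
  proof -
    have "0 < (-2*H*M)*(a-b)" by (rule mult_pos_pos[OF cHM]) (use a0 in simp)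
    thus ?thesis using a0 by (intro divide_pos_pos) auto
  qed
  finally show ?thesis unfolding a_def .
qed

lemma root_m: assumes "W M H L (r0 M H L) < E^2/2" "E^2/2 < -H"
  shows "\<exists>r. r1 M H L < r \<and> r < r0 M H L \<and> Z M E H L r = 0"
proof -
  have z0: "Z M E H L (r0 M H L) < 0" unfolding Z_def using assms by simp
  have z1: "Z M E H L (r1 M H L) > 0" using Z_r1_pos assms by simp
  have "\<exists>x. r1 M H L \<le> x \<and> x \<le> r0 M H L \<and> Z M E H L x = 0"
  proof (rule IVT2)
    show "Z M E H L (r0 M H L) \<le> 0" "0 \<le> Z M E H L (r1 M H L)" "r1 M H L \<le> r0 M H L"
      using z0 z1 CB by auto
    show "\<forall>x. r1 M H L \<le> x \<and> x \<le> r0 M H L \<longrightarrow> isCont (Z M E H L) x"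
      using Z_cont r1pos by force
  qed
  then obtain x where x: "r1 M H L \<le> x" "x \<le> r0 M H L" "Z M E H L x = 0" by blast
  have "x \<noteq> r1 M H L" "x \<noteq> r0 M H L" using x z0 z1 by auto
  thus ?thesis using x by (intro exI[of _ x]) auto
qed

lemma root_p: assumes "W M H L (r0 M H L) < E^2/2" "E^2/2 < -H"
  shows "\<exists>r. r0 M H L < r \<and> Z M E H L r = 0"
proof -
  have z0: "Z M E H L (r0 M H L) < 0" unfolding Z_def using assms by simp
  define h where "h = -H"
  define d where "d = h - E^2/2"
  have h0: "h > 0" "d > 0" unfolding h_def d_def using H0 assms by auto
  define R where "R = max (r0 M H L + 1) (4*M*h/d)"
  have R1: "R > r0 M H L" unfolding R_def by simp
  have R0: "R > 0" using R1 CB r1pos by simp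
  have Rb: "4*M*h/d \<le> R" unfolding R_def by simp
  have "2*M/R \<le> d/(2*h)"
  proof -
    have "4*M*h \<le> R*d" using Rb h0 by (simp add: divide_le_eq)
    thus ?thesis using R0 h0 by (simp add: divide_simps ac_simps)
  qed
  moreover have "d/(2*h) \<le> 1/2" unfolding d_def using h0 by (simp add: divide_simps)
  ultimately have m1: "0 \<le> 1 - 2*M/R" "1 - d/(2*h) \<le> 1 - 2*M/R" by linarith+
  have "h*(1 - d/(2*h)) \<le> h*(1 - 2*M/R)" using m1 h0 by (intro mult_left_mono) auto
  moreover have "h*(1 - d/(2*h)) = h - d/2" using h0 by (simp add: field_simps)
  ultimately have m: "0 \<le> 1 - 2*M/R" "h*(1 - 2*M/R) \<ge> h - d/2" using m1 by auto
  have "W M H L R = 1/2 * (L^2/R^2) * (1 - 2*M/R) + h*(1 - 2*M/R)"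
    unfolding W_def h_def by (simp add: algebra_simps)
  also have "\<dots> \<ge> h*(1 - 2*M/R)" using m by simp
  finally have "W M H L R \<ge> h - d/2" using m by simp
  hence "W M H L R > E^2/2" using h0 d_def by linarith
  hence zR: "Z M E H L R > 0" unfolding Z_def by simp
  have "\<exists>x. r0 M H L \<le> x \<and> x \<le> R \<and> Z M E H L x = 0"
  proof (rule IVT)
    show "Z M E H L (r0 M H L) \<le> 0" "0 \<le> Z M E H L R" "r0 M H L \<le> R"
      using z0 zR R1 by auto
    show "\<forall>x. r0 M H L \<le> x \<and> x \<le> R \<longrightarrow> isCont (Z M E H L) x"
      using Z_cont r1pos CB by force
  qed
  then obtain x where x: "r0 M H L \<le> x" "Z M E H L x = 0" by blast
  have "x \<noteq> r0 M H L" using x z0 by auto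
  thus ?thesis using x by (intro exI[of _ x]) auto
qed

end



lemma root_cont_dec:
  fixes f :: "'a::topological_space \<Rightarrow> real \<Rightarrow> real" and a b \<rho> :: "'a \<Rightarrow> real"
  assumes R: "\<And>p. p \<in> S \<Longrightarrow> a p < \<rho> p \<and> \<rho> p < b p \<and> f p (\<rho> p) = 0"
    and D: "\<And>p x y. p \<in> S \<Longrightarrow> a p < x \<Longrightarrow> x < y \<Longrightarrow> y < b p \<Longrightarrow> f p y < f p x"
    and ca: "continuous_on S a" and cb: "continuous_on S b"
    and cf: "\<And>c. continuous_on S (\<lambda>p. f p c)"
  shows "continuous_on S \<rho>"
  unfolding continuous_on_def
proof
  fix p0 assume p0: "p0 \<in> S"
  let ?F = "at p0 within S"
  have evS: "eventually (\<lambda>p. p \<in> S) ?F" by (simp add: eventually_at_filter)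
  have ta: "(a \<longlongrightarrow> a p0) ?F" using ca p0 unfolding continuous_on_def by blast
  have tb: "(b \<longlongrightarrow> b p0) ?F" using cb p0 unfolding continuous_on_def by blast
  have tf: "\<And>c. ((\<lambda>p. f p c) \<longlongrightarrow> f p0 c) ?F" using cf p0 unfolding continuous_on_def by blast
  note R0 = R[OF p0]
  show "(\<rho> \<longlongrightarrow> \<rho> p0) ?F"
  proof (rule order_tendstoI)
    fix c0 assume c0: "c0 < \<rho> p0"
    define c where "c = max c0 ((a p0 + \<rho> p0)/2)"
    have c: "a p0 < c" "c < \<rho> p0" "c0 \<le> c" unfolding c_def using c0 R0 by (auto simp: max_def min_def)
    have fc: "f p0 c > 0" using D[OF p0 c(1) c(2)] R0 by simp
    have e1: "eventually (\<lambda>p. a p < c) ?F" by (rule order_tendstoD(2)[OF ta c(1)])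
    have e2: "eventually (\<lambda>p. c < b p) ?F" by (rule order_tendstoD(1)[OF tb]) (use c R0 in linarith)
    have e3: "eventually (\<lambda>p. 0 < f p c) ?F" by (rule order_tendstoD(1)[OF tf fc])
    show "eventually (\<lambda>p. c0 < \<rho> p) ?F" using evS e1 e2 e3
    proof eventually_elim
      case (elim p)
      have Rp: "a p < \<rho> p" "\<rho> p < b p" "f p (\<rho> p) = 0" using R[OF elim(1)] by auto
      have "c < \<rho> p"
      proof (rule ccontr)
        assume "\<not> c < \<rho> p"
        hence "\<rho> p < c \<or> \<rho> p = c" by auto
        thus False
        proof
          assume "\<rho> p < c"
          thus False using D[OF elim(1) Rp(1) _ elim(3)] Rp elim(4) by force
        next
          assume "\<rho> p = c" thus False using Rp elim(4) by simp
        qed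
      qed
      thus ?case using c by simp
    qed
  next
    fix c0 assume c0: "\<rho> p0 < c0"
    define c where "c = min c0 ((b p0 + \<rho> p0)/2)"
    have c: "\<rho> p0 < c" "c < b p0" "c \<le> c0" unfolding c_def using c0 R0 by (auto simp: max_def min_def)
    have fc: "f p0 c < 0" using D[OF p0 _ c(1) c(2)] R0 by simp
    have e1: "eventually (\<lambda>p. a p < c) ?F" by (rule order_tendstoD(2)[OF ta]) (use c R0 in linarith)
    have e2: "eventually (\<lambda>p. c < b p) ?F" by (rule order_tendstoD(1)[OF tb c(2)])
    have e3: "eventually (\<lambda>p. f p c < 0) ?F" by (rule order_tendstoD(2)[OF tf fc])
    show "eventually (\<lambda>p. \<rho> p < c0) ?F" using evS e1 e2 e3
    proof eventually_elim
      case (elim p)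
      have Rp: "a p < \<rho> p" "\<rho> p < b p" "f p (\<rho> p) = 0" using R[OF elim(1)] by auto
      have "\<rho> p < c"
      proof (rule ccontr)
        assume "\<not> \<rho> p < c"
        hence "c < \<rho> p \<or> \<rho> p = c" by auto
        thus False
        proof
          assume "c < \<rho> p"
          thus False using D[OF elim(1) elim(2) _ Rp(2)] Rp elim(4) by force
        next
          assume "\<rho> p = c" thus False using Rp elim(4) by simp
        qed
      qed
      thus ?case using c by simp
    qed
  qed
qed

lemma root_cont_inc:
  fixes f :: "'a::topological_space \<Rightarrow> real \<Rightarrow> real" and a \<rho> :: "'a \<Rightarrow> real"
  assumes R: "\<And>p. p \<in> S \<Longrightarrow> a p < \<rho> p \<and> f p (\<rho> p) = 0"
    and D: "\<And>p x y. p \<in> S \<Longrightarrow> a p < x \<Longrightarrow> x < y \<Longrightarrow> f p x < f p y"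
    and ca: "continuous_on S a"
    and cf: "\<And>c. continuous_on S (\<lambda>p. f p c)"
  shows "continuous_on S \<rho>"
  unfolding continuous_on_def
proof
  fix p0 assume p0: "p0 \<in> S"
  let ?F = "at p0 within S"
  have evS: "eventually (\<lambda>p. p \<in> S) ?F" by (simp add: eventually_at_filter)
  have ta: "(a \<longlongrightarrow> a p0) ?F" using ca p0 unfolding continuous_on_def by blast
  have tf: "\<And>c. ((\<lambda>p. f p c) \<longlongrightarrow> f p0 c) ?F" using cf p0 unfolding continuous_on_def by blast
  note R0 = R[OF p0]
  show "(\<rho> \<longlongrightarrow> \<rho> p0) ?F"
  proof (rule order_tendstoI)
    fix c0 assume c0: "c0 < \<rho> p0"
    define c where "c = max c0 ((a p0 + \<rho> p0)/2)"
    have c: "a p0 < c" "c < \<rho> p0" "c0 \<le> c" unfolding c_def using c0 R0 by (auto simp: max_def min_def)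
    have fc: "f p0 c < 0" using D[OF p0 c(1) c(2)] R0 by simp
    have e1: "eventually (\<lambda>p. a p < c) ?F" by (rule order_tendstoD(2)[OF ta c(1)])
    have e3: "eventually (\<lambda>p. f p c < 0) ?F" by (rule order_tendstoD(2)[OF tf fc])
    show "eventually (\<lambda>p. c0 < \<rho> p) ?F" using evS e1 e3
    proof eventually_elim
      case (elim p)
      have Rp: "a p < \<rho> p" "f p (\<rho> p) = 0" using R[OF elim(1)] by auto
      have "c < \<rho> p"
      proof (rule ccontr)
        assume "\<not> c < \<rho> p"
        hence "\<rho> p < c \<or> \<rho> p = c" by auto
        thus False
        proof
          assume "\<rho> p < c"
          thus False using D[OF elim(1) Rp(1)] Rp elim(3) by force
        next
          assume "\<rho> p = c" thus False using Rp elim(3) by simp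
        qed
      qed
      thus ?case using c by simp
    qed
  next
    fix c assume c: "\<rho> p0 < c"
    have fc: "f p0 c > 0" using D[OF p0 _ c] R0 by simp
    have e1: "eventually (\<lambda>p. a p < c) ?F" by (rule order_tendstoD(2)[OF ta]) (use c R0 in linarith)
    have e3: "eventually (\<lambda>p. 0 < f p c) ?F" by (rule order_tendstoD(1)[OF tf fc])
    show "eventually (\<lambda>p. \<rho> p < c) ?F" using evS e1 e3
    proof eventually_elim
      case (elim p)
      have Rp: "a p < \<rho> p" "f p (\<rho> p) = 0" using R[OF elim(1)] by auto
      show "\<rho> p < c"
      proof (rule ccontr)
        assume "\<not> \<rho> p < c"
        hence "c < \<rho> p \<or> \<rho> p = c" by auto
        thus False
        proof
          assume "c < \<rho> p"
          thus False using D[OF elim(1) elim(2)] Rp elim(3) by force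
        next
          assume "\<rho> p = c" thus False using Rp elim(3) by simp
        qed
      qed
    qed
  qed
qed


lemma Zc_cont: "continuous_on S (\<lambda>p. Z M E (fst p) (snd p) c)"
proof (cases "c = 0")
  case True show ?thesis unfolding Z_def W_def True by (simp, intro continuous_intros)
next
  case False show ?thesis unfolding Z_def W_def using False by (intro continuous_intros) auto
qed
lemma r1_cont: "\<forall>p\<in>S. fst p < 0 \<Longrightarrow> M \<noteq> 0 \<Longrightarrow> continuous_on S (\<lambda>p. r1 M (fst p) (snd p))"
  unfolding r1_def by (intro continuous_intros) auto
lemma r0_cont: "\<forall>p\<in>S. fst p < 0 \<Longrightarrow> M \<noteq> 0 \<Longrightarrow> continuous_on S (\<lambda>p. r0 M (fst p) (snd p))"
  unfolding r0_def by (intro continuous_intros) auto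

lemma set_iff: assumes M0: "M > 0"
  shows "(H < 0 \<and> 4 * sqrt 2 * sqrt (-H) * M < L \<and> W M H L (r0 M H L) < E^2/2 \<and> E^2/2 < -H) \<longleftrightarrow>
    (-(27/50) * E^2 < H \<and> H < -(1/2) * E^2 \<and> 4 * sqrt 2 * sqrt (-H) * M < L \<and>
              L < sqrt (-H) * M * zeta_inv (E^2 / (-2*H)))"
proof
  assume A: "H < 0 \<and> 4 * sqrt 2 * sqrt (-H) * M < L \<and> W M H L (r0 M H L) < E^2/2 \<and> E^2/2 < -H"
  hence H0: "H < 0" and LL: "4 * sqrt 2 * sqrt (-H) * M < L" by auto
  define u where "u = L/(sqrt(-H)*M)"
  define y where "y = E^2 / (-2*H)"
  have shM: "sqrt(-H)*M > 0" using H0 M0 by simp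
  have ug: "4 * sqrt 2 < u" and Wz: "W M H L (r0 M H L) = -H * zeta u"
    using W_r0_zeta[OF M0 H0 LL] unfolding u_def by auto
  have "-H * zeta u < E^2/2" using A Wz by simp
  hence zy: "zeta u < y" unfolding y_def using H0 by (simp add: field_simps)
  have y1: "y < 1" unfolding y_def using A H0 by (simp add: field_simps)
  have y0: "25/27 < y" using zy zeta_range[OF ug] by simp
  hence "25 * (-2*H) < 27 * E^2" unfolding y_def using H0 by (simp add: field_simps)
  hence h1: "-(27/50) * E^2 < H" by simp
  have h2: "H < -(1/2) * E^2" using A by simp
  have "u < zeta_inv y" using zeta_inv_iff[OF y0 y1 ug] zy by simp
  hence "u * (sqrt(-H)*M) < zeta_inv y * (sqrt(-H)*M)" using shM by (rule mult_strict_right_mono)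
  moreover have "u * (sqrt(-H)*M) = L" unfolding u_def using H0 M0 by simp
  ultimately have "L < sqrt (-H) * M * zeta_inv y" by (simp add: mult.commute)
  thus "-(27/50) * E^2 < H \<and> H < -(1/2) * E^2 \<and> 4 * sqrt 2 * sqrt (-H) * M < L \<and>
              L < sqrt (-H) * M * zeta_inv (E^2 / (-2*H))" using h1 h2 LL unfolding y_def by simp
next
  assume A: "-(27/50) * E^2 < H \<and> H < -(1/2) * E^2 \<and> 4 * sqrt 2 * sqrt (-H) * M < L \<and>
              L < sqrt (-H) * M * zeta_inv (E^2 / (-2*H))"
  have E2: "E^2 \<ge> 0" by simp
  have H0: "H < 0" using A E2 by linarith
  have LL: "4 * sqrt 2 * sqrt (-H) * M < L" using A by simp
  define u where "u = L/(sqrt(-H)*M)"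
  define y where "y = E^2 / (-2*H)"
  have shM: "sqrt(-H)*M > 0" using H0 M0 by simp
  have ug: "4 * sqrt 2 < u" and Wz: "W M H L (r0 M H L) = -H * zeta u"
    using W_r0_zeta[OF M0 H0 LL] unfolding u_def by auto
  have "25 * (-2*H) < 27 * E^2" using A by simp
  hence y0: "25/27 < y" unfolding y_def using H0 by (simp add: field_simps)
  have y1: "y < 1" unfolding y_def using A H0 by (simp add: field_simps)
  have "L < sqrt (-H) * M * zeta_inv y" using A unfolding y_def by simp
  hence "u < zeta_inv y" unfolding u_def using shM by (simp add: pos_divide_less_eq mult.commute)
  hence "zeta u < y" using zeta_inv_iff[OF y0 y1 ug] by simp
  hence "-H * zeta u < E^2/2" unfolding y_def using H0 by (simp add: field_simps)
  hence "W M H L (r0 M H L) < E^2/2" using Wz by simp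
  moreover have "E^2/2 < -H" using A by simp
  ultimately show "H < 0 \<and> 4 * sqrt 2 * sqrt (-H) * M < L \<and> W M H L (r0 M H L) < E^2/2 \<and> E^2/2 < -H"
    using H0 LL by simp
qed

lemma memLE: "(H, L) \<in> Lambda_E M E \<longleftrightarrow>
   (H < 0 \<and> 4 * sqrt 2 * sqrt (-H) * M < L \<and> W M H L (r0 M H L) < E^2/2 \<and> E^2/2 < -H)"
  unfolding Lambda_E_def Lambda_tilde_def omega0_def by auto

theorem proposition4p3:
  fixes M E :: real
  assumes "M > 0" and "sqrt (25/27) < E" and "E < 1"
  shows "Lambda_E M E =
           {(H, L). -(27/50) * E^2 < H \<and> H < -(1/2) * E^2 \<and>
              4 * sqrt 2 * sqrt (-H) * M < L \<and>
              L < sqrt (-H) * M * zeta_inv (E^2 / (-2*H))}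
       \<and> (\<forall>(H, L) \<in> Lambda_E M E.
             Z M E H L (r0 M H L) < 0 \<and>
             deriv (Z M E H L) (r0 M H L) = 0 \<and>
             deriv (deriv (Z M E H L)) (r0 M H L) > 0)
       \<and> (\<exists>rm rp :: real \<times> real \<Rightarrow> real.
             continuous_on (Lambda_E M E) rm \<and> continuous_on (Lambda_E M E) rp \<and>
             (\<forall>(H, L) \<in> Lambda_E M E.
                0 < rm (H, L) \<and> 0 < rp (H, L) \<and>
                rm (H, L) < r0 M H L \<and> r0 M H L < rp (H, L) \<and>
                Z M E H L (rm (H, L)) = 0 \<and> Z M E H L (rp (H, L)) = 0 \<and>
                (\<forall>r \<in> {rm (H, L) .. rp (H, L)} - {r0 M H L}.
                   deriv (Z M E H L) r * (r - r0 M H L) > 0)))"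
proof (intro conjI)
  note M0 = assms(1)
  show "Lambda_E M E =
           {(H, L). -(27/50) * E^2 < H \<and> H < -(1/2) * E^2 \<and>
              4 * sqrt 2 * sqrt (-H) * M < L \<and>
              L < sqrt (-H) * M * zeta_inv (E^2 / (-2*H))}"
  proof (rule set_eqI)
    fix p :: "real \<times> real"
    obtain H L where p: "p = (H, L)" by (cases p)
    show "p \<in> Lambda_E M E \<longleftrightarrow> p \<in> {(H, L). -(27/50) * E^2 < H \<and> H < -(1/2) * E^2 \<and>
              4 * sqrt 2 * sqrt (-H) * M < L \<and>
              L < sqrt (-H) * M * zeta_inv (E^2 / (-2*H))}"
      unfolding p memLE using set_iff[OF M0, of H L E] by simp
  qed
  show "\<forall>(H, L) \<in> Lambda_E M E.
             Z M E H L (r0 M H L) < 0 \<and>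
             deriv (Z M E H L) (r0 M H L) = 0 \<and>
             deriv (deriv (Z M E H L)) (r0 M H L) > 0"
  proof (intro ballI, clarify)
    fix H L assume "(H, L) \<in> Lambda_E M E"
    hence A: "H < 0" "4 * sqrt 2 * sqrt (-H) * M < L" "W M H L (r0 M H L) < E^2/2" "E^2/2 < -H"
      unfolding memLE by auto
    show "Z M E H L (r0 M H L) < 0 \<and>
             deriv (Z M E H L) (r0 M H L) = 0 \<and>
             deriv (deriv (Z M E H L)) (r0 M H L) > 0"
      using A deriv_r0[OF M0 A(1,2)] deriv2_r0[OF M0 A(1,2)] unfolding Z_def by simp
  qed
  define S where "S = Lambda_E M E"
  have SP: "\<And>p. p \<in> S \<Longrightarrow> fst p < 0 \<and> 4 * sqrt 2 * sqrt (-fst p) * M < snd p \<and>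
      W M (fst p) (snd p) (r0 M (fst p) (snd p)) < E^2/2 \<and> E^2/2 < - fst p"
    unfolding S_def using memLE by (metis prod.collapse)
  define rm where "rm = (\<lambda>p. SOME r. r1 M (fst p) (snd p) < r \<and> r < r0 M (fst p) (snd p) \<and>
      Z M E (fst p) (snd p) r = 0)"
  define rp where "rp = (\<lambda>p. SOME r. r0 M (fst p) (snd p) < r \<and> Z M E (fst p) (snd p) r = 0)"
  have rmP: "r1 M (fst p) (snd p) < rm p \<and> rm p < r0 M (fst p) (snd p) \<and> Z M E (fst p) (snd p) (rm p) = 0"
    if "p \<in> S" for p
  proof -
    note P = SP[OF that]
    show ?thesis unfolding rm_def by (rule someI_ex, rule root_m) (use M0 P in auto)
  qed
  have rpP: "r0 M (fst p) (snd p) < rp p \<and> Z M E (fst p) (snd p) (rp p) = 0"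
    if "p \<in> S" for p
  proof -
    note P = SP[OF that]
    show ?thesis unfolding rp_def by (rule someI_ex, rule root_p) (use M0 P in auto)
  qed
  have cr1: "continuous_on S (\<lambda>p. r1 M (fst p) (snd p))" using r1_cont SP M0 by auto
  have cr0: "continuous_on S (\<lambda>p. r0 M (fst p) (snd p))" using r0_cont SP M0 by auto
  show "\<exists>rm rp :: real \<times> real \<Rightarrow> real.
             continuous_on (Lambda_E M E) rm \<and> continuous_on (Lambda_E M E) rp \<and>
             (\<forall>(H, L) \<in> Lambda_E M E.
                0 < rm (H, L) \<and> 0 < rp (H, L) \<and>
                rm (H, L) < r0 M H L \<and> r0 M H L < rp (H, L) \<and>
                Z M E H L (rm (H, L)) = 0 \<and> Z M E H L (rp (H, L)) = 0 \<and>
                (\<forall>r \<in> {rm (H, L) .. rp (H, L)} - {r0 M H L}.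
                   deriv (Z M E H L) r * (r - r0 M H L) > 0))"
  proof (intro exI conjI)
    show "continuous_on (Lambda_E M E) rm" unfolding S_def[symmetric]
    proof (rule root_cont_dec[where f = "\<lambda>p r. Z M E (fst p) (snd p) r", OF _ _ cr1 cr0])
      show "\<And>p. p \<in> S \<Longrightarrow> r1 M (fst p) (snd p) < rm p \<and> rm p < r0 M (fst p) (snd p) \<and> Z M E (fst p) (snd p) (rm p) = 0"
        using rmP by blast
      show "\<And>p x y. p \<in> S \<Longrightarrow> r1 M (fst p) (snd p) < x \<Longrightarrow> x < y \<Longrightarrow> y < r0 M (fst p) (snd p) \<Longrightarrow>
          Z M E (fst p) (snd p) y < Z M E (fst p) (snd p) x"
      proof -
        fix p x y assume a: "p \<in> S" "r1 M (fst p) (snd p) < x" "x < y" "y < r0 M (fst p) (snd p)"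
        note P = SP[OF a(1)]
        show "Z M E (fst p) (snd p) y < Z M E (fst p) (snd p) x"
          by (rule Z_dec) (use M0 P a in auto)
      qed
      show "\<And>c. continuous_on S (\<lambda>p. Z M E (fst p) (snd p) c)" by (rule Zc_cont)
    qed
    show "continuous_on (Lambda_E M E) rp" unfolding S_def[symmetric]
    proof (rule root_cont_inc[where f = "\<lambda>p r. Z M E (fst p) (snd p) r", OF _ _ cr0])
      show "\<And>p. p \<in> S \<Longrightarrow> r0 M (fst p) (snd p) < rp p \<and> Z M E (fst p) (snd p) (rp p) = 0"
        using rpP by blast
      show "\<And>p x y. p \<in> S \<Longrightarrow> r0 M (fst p) (snd p) < x \<Longrightarrow> x < y \<Longrightarrow>
          Z M E (fst p) (snd p) x < Z M E (fst p) (snd p) y"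
      proof -
        fix p x y assume a: "p \<in> S" "r0 M (fst p) (snd p) < x" "x < y"
        note P = SP[OF a(1)]
        show "Z M E (fst p) (snd p) x < Z M E (fst p) (snd p) y"
          by (rule Z_inc) (use M0 P a in auto)
      qed
      show "\<And>c. continuous_on S (\<lambda>p. Z M E (fst p) (snd p) c)" by (rule Zc_cont)
    qed
    show "\<forall>(H, L) \<in> Lambda_E M E.
                0 < rm (H, L) \<and> 0 < rp (H, L) \<and>
                rm (H, L) < r0 M H L \<and> r0 M H L < rp (H, L) \<and>
                Z M E H L (rm (H, L)) = 0 \<and> Z M E H L (rp (H, L)) = 0 \<and>
                (\<forall>r \<in> {rm (H, L) .. rp (H, L)} - {r0 M H L}.
                   deriv (Z M E H L) r * (r - r0 M H L) > 0)"
    proof (intro ballI, clarify)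
      fix H L assume HL: "(H, L) \<in> Lambda_E M E"
      hence HLS: "(H, L) \<in> S" unfolding S_def .
      hence A: "H < 0" "4 * sqrt 2 * sqrt (-H) * M < L" using SP by auto
      have m: "r1 M H L < rm (H, L)" "rm (H, L) < r0 M H L" "Z M E H L (rm (H, L)) = 0"
        using rmP[OF HLS] by auto
      have p: "r0 M H L < rp (H, L)" "Z M E H L (rp (H, L)) = 0" using rpP[OF HLS] by auto
      have r1p: "0 < r1 M H L" using r1pos[OF M0 A] .
      have D: "deriv (Z M E H L) r * (r - r0 M H L) > 0" if r: "r \<in> {rm (H, L) .. rp (H, L)} - {r0 M H L}" for r
      proof -
        have rr: "r1 M H L < r" "r \<noteq> r0 M H L" using r m by auto
        hence r0': "r > 0" using r1p by linarith
        have "deriv (Z M E H L) r * (r - r0 M H L) =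
            ((-2*H*M) * ((r - r0 M H L)^2 * (r - r1 M H L))) / r^4"
          using deriv_Z[OF M0 A, of r] Zfac[OF M0 A, of r] r0' by (simp add: power2_eq_square algebra_simps)
        also have "\<dots> > 0"
        proof -
          have "(r - r0 M H L)^2 > 0" using rr by simp
          hence "(r - r0 M H L)^2 * (r - r1 M H L) > 0" using rr by simp
          hence "(-2*H*M) * ((r - r0 M H L)^2 * (r - r1 M H L)) > 0" by (rule mult_pos_pos[OF cHM[OF M0 A]])
          thus ?thesis by (rule divide_pos_pos) (use r0' in simp)
        qed
        finally show ?thesis .
      qed
      show "0 < rm (H, L) \<and> 0 < rp (H, L) \<and>
                rm (H, L) < r0 M H L \<and> r0 M H L < rp (H, L) \<and>
                Z M E H L (rm (H, L)) = 0 \<and> Z M E H L (rp (H, L)) = 0 \<and>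
                (\<forall>r \<in> {rm (H, L) .. rp (H, L)} - {r0 M H L}.
                   deriv (Z M E H L) r * (r - r0 M H L) > 0)"
        using m p r1p D by auto
    qed
  qed
qed


end
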